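(* Let $Q$ be a weakly compact convex subset of a Banach space $U$. Let $r>0$, $\beta\in[0,1)$, and let $\{\beta_n\}_n$ be a sequence of real numbers with $\beta_n\to\beta$. Suppose $T:Q\to Q$ satisfies: for all $p,q\in Q$ and $n\geq 1$, $\|p-q\|<r$ implies $\|T^np-T^nq\|\leq\beta_n\|p-q\|$. If there exists $q_0\in Q$ such that the asymptotic radius of $\{T^nq_0\}_n$ relative to $Q$ is less than $r$, then $T$ has a unique fixed point.
   Context: A map as in the statement is called a uniformly asymptotic local contraction. For a bounded sequence $\{x_n\}_n$ in $U$, its asymptotic radius relative to $Q$ is $\inf_{y\in Q}\limsup_{n\to\infty}\|x_n-y\|$. *)

theory Defs
  imports "HOL-Analysis.Analysis"
begin

definition weak_topology :: "'a::real_normed_vector topology" where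
  "weak_topology = topology_generated_by
     {(f -` V) | (f :: 'a \<Rightarrow> real) V. bounded_linear f \<and> open V}"

definition weakly_compact :: "'a::real_normed_vector set \<Rightarrow> bool" where
  "weakly_compact Q \<longleftrightarrow> compactin weak_topology Q"

definition asymptotic_radius :: "'a::real_normed_vector set \<Rightarrow> (nat \<Rightarrow> 'a) \<Rightarrow> ereal" where
  "asymptotic_radius Q x = (INF y\<in>Q. limsup (\<lambda>n. ereal (norm (x n - y))))"

end

theory Submission
  imports Defs
begin

definition lingraph :: "('a::real_normed_vector \<times> real) set \<Rightarrow> bool" where
 "lingraph G \<longleftrightarrow> (0,0) \<in> G \<and> (\<forall>a u b v. (a,u)\<in>G \<longrightarrow> (b,v)\<in>G \<longrightarrow> (a+b,u+v)\<in>G)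
    \<and> (\<forall>c a u. (a,u)\<in>G \<longrightarrow> (c *\<^sub>R a, c*u)\<in>G) \<and> (\<forall>a u v. (a,u)\<in>G \<longrightarrow> (a,v)\<in>G \<longrightarrow> u=v)
    \<and> (\<forall>a u. (a,u)\<in>G \<longrightarrow> u \<le> norm a)"

lemma lingraph_extend:
  fixes M :: "('a::real_normed_vector \<times> real) set"
  assumes L: "lingraph M" and y: "\<forall>u. (y,u) \<notin> M"
  shows "\<exists>M' c. lingraph M' \<and> M \<subseteq> M' \<and> (y, c) \<in> M'"
proof -
  have zero: "(0,0) \<in> M" using L unfolding lingraph_def by blast
  have add: "\<And>a u b v. (a,u)\<in>M \<Longrightarrow> (b,v)\<in>M \<Longrightarrow> (a+b,u+v)\<in>M" using L unfolding lingraph_def by blast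
  have scale: "\<And>c a u. (a,u)\<in>M \<Longrightarrow> (c *\<^sub>R a, c*u)\<in>M" using L unfolding lingraph_def by blast
  have funq: "\<And>a u v. (a,u)\<in>M \<Longrightarrow> (a,v)\<in>M \<Longrightarrow> u=v" using L unfolding lingraph_def by blast
  have dom: "\<And>a u. (a,u)\<in>M \<Longrightarrow> u \<le> norm a" using L unfolding lingraph_def by blast
  have diff: "(a-b,u-v)\<in>M" if "(a,u)\<in>M" "(b,v)\<in>M" for a u b v
    using add[OF that(1) scale[OF that(2), of "-1"]] by simp
  have key: "u - norm (a - y) \<le> norm (b + y) - v" if "(a,u)\<in>M" "(b,v)\<in>M" for a u b v
  proof -
    have "u + v \<le> norm (a + b)" using dom[OF add[OF that]] .
    also have "a + b = (a - y) + (b + y)" by simp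
    also have "norm ((a - y) + (b + y)) \<le> norm (a - y) + norm (b + y)" by (rule norm_triangle_ineq)
    finally show ?thesis by simp
  qed
  define S where "S = {u - norm (a - y) | a u. (a,u)\<in>M}"
  define c where "c = Sup S"
  have Sne: "S \<noteq> {}" using zero unfolding S_def by blast
  have Sbdd: "bdd_above S" unfolding S_def bdd_above_def
    using key[OF _ zero] by fastforce
  have c1: "u - norm (a - y) \<le> c" if "(a,u)\<in>M" for a u
    unfolding c_def by (rule cSup_upper[OF _ Sbdd]) (use that S_def in blast)
  have c2: "c \<le> norm (b + y) - v" if "(b,v)\<in>M" for b v
    unfolding c_def by (rule cSup_least[OF Sne]) (use that key S_def in blast)
  define M' where "M' = {(a + t *\<^sub>R y, u + t*c) | a u t. (a,u)\<in>M}"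
  have "lingraph M'"
    unfolding lingraph_def
  proof (intro conjI allI impI)
    show "(0,0) \<in> M'" unfolding M'_def using zero by force
  next
    fix a u b v assume "(a,u) \<in> M'" "(b,v) \<in> M'"
    then obtain a1 u1 t1 a2 u2 t2 where "(a1,u1)\<in>M" "(a2,u2)\<in>M"
      "a = a1 + t1 *\<^sub>R y" "u = u1 + t1*c" "b = a2 + t2 *\<^sub>R y" "v = u2 + t2*c"
      unfolding M'_def by blast
    then show "(a+b,u+v) \<in> M'" unfolding M'_def
      by (intro CollectI exI[of _ "a1+a2"] exI[of _ "u1+u2"] exI[of _ "t1+t2"])
         (auto simp: add algebra_simps)
  next
    fix d a u assume "(a,u) \<in> M'"
    then obtain a1 u1 t1 where "(a1,u1)\<in>M" "a = a1 + t1 *\<^sub>R y" "u = u1 + t1*c"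
      unfolding M'_def by blast
    then show "(d *\<^sub>R a, d*u) \<in> M'" unfolding M'_def
      by (intro CollectI exI[of _ "d *\<^sub>R a1"] exI[of _ "d*u1"] exI[of _ "d*t1"])
         (auto simp: scale algebra_simps)
  next
    fix a u v assume "(a,u) \<in> M'" "(a,v) \<in> M'"
    then obtain a1 u1 t1 a2 u2 t2 where m: "(a1,u1)\<in>M" "(a2,u2)\<in>M"
      and e: "a = a1 + t1 *\<^sub>R y" "u = u1 + t1*c" "a = a2 + t2 *\<^sub>R y" "v = u2 + t2*c"
      unfolding M'_def by blast
    show "u = v"
    proof (cases "t1 = t2")
      case True
      then have "a1 = a2" using e by simp
      then show ?thesis using funq m e True by auto
    next
      case False
      have "a1 - a2 = (t2 - t1) *\<^sub>R y" using e by (simp add: algebra_simps)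
      then have "(1/(t2-t1)) *\<^sub>R (a1 - a2) = y" using False by simp
      moreover have "((1/(t2-t1)) *\<^sub>R (a1 - a2), (1/(t2-t1)) * (u1 - u2)) \<in> M"
        by (rule scale[OF diff[OF m]])
      ultimately show ?thesis using y by metis
    qed
  next
    fix a u assume "(a,u) \<in> M'"
    then obtain a1 u1 t where m: "(a1,u1)\<in>M" and e: "a = a1 + t *\<^sub>R y" "u = u1 + t*c"
      unfolding M'_def by blast
    show "u \<le> norm a"
    proof (cases "t = 0")
      case True then show ?thesis using dom m e by simp
    next
      case False
      show ?thesis
      proof (cases "t > 0")
        case True
        have "c \<le> norm ((1/t) *\<^sub>R a1 + y) - (1/t)*u1" by (rule c2[OF scale[OF m]])
        then have "t * c \<le> t * (norm ((1/t) *\<^sub>R a1 + y) - (1/t)*u1)"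
          using True by (simp add: mult_left_mono)
        also have "t * (norm ((1/t) *\<^sub>R a1 + y) - (1/t)*u1) = norm (t *\<^sub>R ((1/t) *\<^sub>R a1 + y)) - u1"
          using True by (simp add: right_diff_distrib)
        also have "t *\<^sub>R ((1/t) *\<^sub>R a1 + y) = a" using True e by (simp add: scaleR_add_right)
        finally show ?thesis using e by simp
      next
        case False2: False
        define s where "s = -t"
        have s: "s > 0" using False False2 s_def by simp
        have "(1/s)*u1 - norm ((1/s) *\<^sub>R a1 - y) \<le> c" by (rule c1[OF scale[OF m]])
        then have "s * ((1/s)*u1 - norm ((1/s) *\<^sub>R a1 - y)) \<le> s * c"
          using s by (simp add: mult_left_mono)
        also have "s * ((1/s)*u1 - norm ((1/s) *\<^sub>R a1 - y)) = u1 - norm (s *\<^sub>R ((1/s) *\<^sub>R a1 - y))"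
          using s by (simp add: right_diff_distrib)
        also have "s *\<^sub>R ((1/s) *\<^sub>R a1 - y) = a" using s e s_def by (simp add: scaleR_diff_right)
        finally show ?thesis using e s_def by simp
      qed
    qed
  qed
  moreover have "M \<subseteq> M'"
  proof
    fix z assume z: "z \<in> M"
    obtain a u where zz: "z = (a,u)" by (cases z)
    show "z \<in> M'" unfolding M'_def zz
      by (intro CollectI exI[of _ a] exI[of _ u] exI[of _ "0::real"]) (use z zz in auto)
  qed
  moreover have "(y, c) \<in> M'" unfolding M'_def using zero
    by (intro CollectI exI[of _ 0] exI[of _ "0::real"] exI[of _ "1::real"]) auto
  ultimately show ?thesis by blast
qed

lemma lingraphD:
  assumes "lingraph G"
  shows lg_zero: "(0,0) \<in> G"
    and lg_add: "(a,u)\<in>G \<Longrightarrow> (b,v)\<in>G \<Longrightarrow> (a+b,u+v)\<in>G"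
    and lg_scale: "(a,u)\<in>G \<Longrightarrow> (c *\<^sub>R a, c*u)\<in>G"
    and lg_fun: "(a,u)\<in>G \<Longrightarrow> (a,v)\<in>G \<Longrightarrow> u=v"
    and lg_dom: "(a,u)\<in>G \<Longrightarrow> u \<le> norm a"
  using assms unfolding lingraph_def by blast+

lemma exists_sep_functional:
  fixes x0 :: "'a::real_normed_vector"
  assumes x0: "x0 \<noteq> 0"
  shows "\<exists>f::'a \<Rightarrow> real. bounded_linear f \<and> f x0 \<noteq> 0"
proof -
  define A where "A = {G :: ('a \<times> real) set. lingraph G \<and> (x0, norm x0) \<in> G}"
  define B0 where "B0 = {(t *\<^sub>R x0, t * norm x0) | t. True}"
  have B0: "B0 \<in> A"
    unfolding A_def lingraph_def
  proof (intro CollectI conjI allI impI)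
    show "(0,0) \<in> B0" unfolding B0_def by (intro CollectI exI[of _ 0]) auto
    show "(x0, norm x0) \<in> B0" unfolding B0_def by (intro CollectI exI[of _ 1]) auto
  next
    fix a u b v assume "(a,u) \<in> B0" "(b,v) \<in> B0"
    then obtain t s where "a = t *\<^sub>R x0" "u = t * norm x0" "b = s *\<^sub>R x0" "v = s * norm x0"
      unfolding B0_def by blast
    then show "(a+b,u+v) \<in> B0" unfolding B0_def
      by (intro CollectI exI[of _ "t+s"]) (auto simp: algebra_simps)
  next
    fix d a u assume "(a,u) \<in> B0"
    then obtain t where "a = t *\<^sub>R x0" "u = t * norm x0" unfolding B0_def by blast
    then show "(d *\<^sub>R a, d*u) \<in> B0" unfolding B0_def
      by (intro CollectI exI[of _ "d*t"]) (auto simp: algebra_simps)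
  next
    fix a u v assume "(a,u) \<in> B0" "(a,v) \<in> B0"
    then obtain t s where "a = t *\<^sub>R x0" "u = t * norm x0" "a = s *\<^sub>R x0" "v = s * norm x0"
      unfolding B0_def by blast
    then show "u = v" using x0 by (metis scaleR_cancel_right)
  next
    fix a u assume "(a,u) \<in> B0"
    then obtain t where "a = t *\<^sub>R x0" "u = t * norm x0" unfolding B0_def by blast
    then show "u \<le> norm a" by (simp add: mult_right_mono)
  qed
  have "\<forall>C\<in>chains A. \<exists>U\<in>A. \<forall>X\<in>C. X \<subseteq> U"
  proof
    fix C assume C: "C \<in> chains A"
    show "\<exists>U\<in>A. \<forall>X\<in>C. X \<subseteq> U"
    proof (cases "C = {}")
      case True then show ?thesis using B0 by blast
    next
      case False
      have CA: "C \<subseteq> A" and ch: "\<And>X Y. X \<in> C \<Longrightarrow> Y \<in> C \<Longrightarrow> X \<subseteq> Y \<or> Y \<subseteq> X"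
        using C unfolding chains_def chain_subset_def by auto
      have LC: "\<And>X. X \<in> C \<Longrightarrow> lingraph X" and xC: "\<And>X. X \<in> C \<Longrightarrow> (x0, norm x0) \<in> X"
        using CA unfolding A_def by auto
      have two: "\<exists>Z\<in>C. p \<in> Z \<and> q \<in> Z" if pq: "p \<in> \<Union>C" "q \<in> \<Union>C" for p q
      proof -
        obtain X Y where "X \<in> C" "Y \<in> C" "p \<in> X" "q \<in> Y" using pq by blast
        then show ?thesis using ch[of X Y] by blast
      qed
      have "lingraph (\<Union>C)"
        unfolding lingraph_def
      proof (intro conjI allI impI)
        obtain X where "X \<in> C" using False by blast
        then show "(0,0) \<in> \<Union>C" using LC lg_zero by blast
      next
        fix a u b v assume "(a,u) \<in> \<Union>C" "(b,v) \<in> \<Union>C"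
        then obtain Z where "Z \<in> C" "(a,u) \<in> Z" "(b,v) \<in> Z" using two by blast
        then show "(a+b,u+v) \<in> \<Union>C" using lg_add[OF LC[of Z]] by blast
      next
        fix d a u assume "(a,u) \<in> \<Union>C"
        then obtain Z where "Z \<in> C" "(a,u) \<in> Z" by blast
        then show "(d *\<^sub>R a, d*u) \<in> \<Union>C" using lg_scale[OF LC[of Z]] by blast
      next
        fix a u v assume "(a,u) \<in> \<Union>C" "(a,v) \<in> \<Union>C"
        then obtain Z where "Z \<in> C" "(a,u) \<in> Z" "(a,v) \<in> Z" using two by blast
        then show "u = v" using lg_fun[OF LC[of Z]] by blast
      next
        fix a u assume "(a,u) \<in> \<Union>C"
        then obtain Z where "Z \<in> C" "(a,u) \<in> Z" by blast
        then show "u \<le> norm a" using lg_dom[OF LC[of Z]] by blast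
      qed
      moreover have "(x0, norm x0) \<in> \<Union>C" using False xC by blast
      ultimately show ?thesis unfolding A_def by blast
    qed
  qed
  from Zorn_Lemma2[OF this] obtain M where MA: "M \<in> A" and max: "\<And>X. X \<in> A \<Longrightarrow> M \<subseteq> X \<Longrightarrow> X = M"
    by blast
  have LM: "lingraph M" and xM: "(x0, norm x0) \<in> M" using MA unfolding A_def by auto
  have total: "\<exists>u. (a,u) \<in> M" for a
  proof (rule ccontr)
    assume "\<nexists>u. (a, u) \<in> M"
    then obtain M' c where "lingraph M'" "M \<subseteq> M'" "(a,c) \<in> M'"
      using lingraph_extend[OF LM] by blast
    moreover then have "M' \<in> A" using xM unfolding A_def by blast
    ultimately have "M' = M" using max by blast
    then show False using \<open>(a,c) \<in> M'\<close> \<open>\<nexists>u. (a, u) \<in> M\<close> by blast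
  qed
  have funq: "\<And>a u v. (a,u)\<in>M \<Longrightarrow> (a,v)\<in>M \<Longrightarrow> u=v" using lg_fun[OF LM] by blast
  define f where "f a = (THE u. (a,u) \<in> M)" for a
  have fM: "(a, f a) \<in> M" for a
    unfolding f_def using total[of a] funq by (metis theI)
  have feq: "(a,u) \<in> M \<Longrightarrow> f a = u" for a u using fM funq by blast
  have "bounded_linear f"
  proof (rule bounded_linear_intro[where K=1])
    fix a b
    have "(a + b, f a + f b) \<in> M" using lg_add[OF LM fM[of a] fM[of b]] .
    then show "f (a + b) = f a + f b" by (rule feq)
  next
    fix d a
    have "(d *\<^sub>R a, d * f a) \<in> M" using lg_scale[OF LM fM[of a]] .
    then show "f (d *\<^sub>R a) = d *\<^sub>R f a" using feq by simp
  next
    fix a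
    have dm: "\<And>a u. (a,u)\<in>M \<Longrightarrow> u \<le> norm a" using lg_dom[OF LM] by blast
    have "f a \<le> norm a" using dm[OF fM[of a]] .
    moreover have "((-1) *\<^sub>R a, (-1) * f a) \<in> M" using lg_scale[OF LM fM[of a]] .
    then have "f ((-1) *\<^sub>R a) = - f a" using feq by simp
    moreover have "f ((-1) *\<^sub>R a) \<le> norm ((-1) *\<^sub>R a)" using dm[OF fM] .
    ultimately show "norm (f a) \<le> norm a * 1" by simp
  qed
  moreover have "f x0 \<noteq> 0" using feq[OF xM] x0 by simp
  ultimately show ?thesis by blast
qed

lemma weak_open_basic:
  fixes f :: "'a::real_normed_vector \<Rightarrow> real"
  assumes "bounded_linear f" "open V"
  shows "openin weak_topology (f -` V)"
  unfolding weak_topology_def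
  by (rule topology_generated_by_Basis) (use assms in blast)

lemma weakly_compact_imp_closed:
  fixes Q :: "'a::real_normed_vector set"
  assumes wc: "weakly_compact Q"
  shows "closed Q"
  unfolding closed_sequential_limits
proof (intro allI impI, elim conjE)
  fix s x assume sQ: "\<forall>n. s n \<in> Q" and lim: "s \<longlonglongrightarrow> x"
  show "x \<in> Q"
  proof (rule ccontr)
    assume xQ: "x \<notin> Q"
    define F where "F q = (SOME f::'a \<Rightarrow> real. bounded_linear f \<and> f (q - x) \<noteq> 0)" for q
    have F: "bounded_linear (F q) \<and> F q (q - x) \<noteq> 0" if "q \<in> Q" for q
    proof -
      have "q - x \<noteq> 0" using that xQ by auto
      then have "\<exists>f::'a \<Rightarrow> real. bounded_linear f \<and> f (q - x) \<noteq> 0" by (rule exists_sep_functional)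
      then show ?thesis unfolding F_def by (rule someI_ex)
    qed
    define d where "d q = \<bar>F q q - F q x\<bar> / 2" for q
    have Fd: "F q q - F q x = F q (q - x)" if "q \<in> Q" for q
      using linear_diff[OF bounded_linear.linear[OF conjunct1[OF F[OF that]]], symmetric] .
    have dpos: "d q > 0" if "q \<in> Q" for q
      using F[OF that] Fd[OF that] unfolding d_def by simp
    define W where "W q = F q -` ball (F q q) (d q)" for q
    have "\<forall>U\<in>W ` Q. openin weak_topology U"
    proof
      fix U assume "U \<in> W ` Q"
      then obtain q where q: "q \<in> Q" "U = W q" by blast
      show "openin weak_topology U" unfolding q(2) W_def
        by (rule weak_open_basic) (use F[OF q(1)] in auto)
    qed
    moreover have "Q \<subseteq> \<Union>(W ` Q)"
    proof
      fix q assume q: "q \<in> Q"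
      have "q \<in> W q" unfolding W_def using dpos[OF q] by simp
      then show "q \<in> \<Union>(W ` Q)" using q by blast
    qed
    ultimately have "\<exists>\<F>. finite \<F> \<and> \<F> \<subseteq> W ` Q \<and> Q \<subseteq> \<Union>\<F>"
      using wc unfolding weakly_compact_def compactin_def by blast
    then obtain \<F> where FF: "finite \<F>" "\<F> \<subseteq> W ` Q" "Q \<subseteq> \<Union>\<F>"
      by blast
    obtain K where K0: "K \<subseteq> Q" "finite K" "\<F> = W ` K"
      using finite_subset_image[OF FF(1,2)] by blast
    have K: "K \<subseteq> Q" "finite K" "Q \<subseteq> \<Union>(W ` K)" using K0 FF(3) by auto
    have "\<forall>q\<in>K. eventually (\<lambda>n. dist (F q (s n)) (F q x) < d q) sequentially"
    proof
      fix q assume "q \<in> K"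
      then have q: "q \<in> Q" using K by blast
      have "(\<lambda>n. F q (s n)) \<longlonglongrightarrow> F q x"
        using bounded_linear.tendsto[OF conjunct1[OF F[OF q]] lim] .
      then show "eventually (\<lambda>n. dist (F q (s n)) (F q x) < d q) sequentially"
        by (rule tendstoD[OF _ dpos[OF q]])
    qed
    then have "eventually (\<lambda>n. \<forall>q\<in>K. dist (F q (s n)) (F q x) < d q) sequentially"
      by (rule eventually_ball_finite[OF K(2)])
    then obtain N where "\<forall>n\<ge>N. \<forall>q\<in>K. dist (F q (s n)) (F q x) < d q"
      unfolding eventually_sequentially by blast
    then have n: "\<forall>q\<in>K. dist (F q (s N)) (F q x) < d q" by blast
    have "s N \<in> \<Union>(W ` K)" using K(3) sQ by blast
    then obtain q where q: "q \<in> K" "s N \<in> W q" by blast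
    then have "dist (F q (s N)) (F q q) < d q" unfolding W_def by (simp add: dist_commute)
    moreover have "dist (F q (s N)) (F q x) < d q" using n q by blast
    ultimately have "\<bar>F q q - F q x\<bar> < 2 * d q"
      unfolding dist_real_def by linarith
    then show False unfolding d_def by simp
  qed
qed

lemma chain_lipschitz:
  fixes g :: "'a::real_normed_vector \<Rightarrow> 'a"
  assumes cQ: "convex Q" and r: "r > 0"
    and loc: "\<And>p q. p \<in> Q \<Longrightarrow> q \<in> Q \<Longrightarrow> norm (p - q) < r \<Longrightarrow> norm (g p - g q) \<le> b * norm (p - q)"
    and x: "x \<in> Q" and y: "y \<in> Q"
  shows "norm (g x - g y) \<le> b * norm (x - y)"
proof -
  obtain k :: nat where k: "norm (x - y) / r < real k" using reals_Archimedean2 by blast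
  have "0 \<le> norm (x - y) / r" using r by simp
  then have "0 < real k" using k by linarith
  then have kpos: "k > 0" by simp
  define z where "z i = x + (real i / real k) *\<^sub>R (y - x)" for i
  have zQ: "z i \<in> Q" if "i \<le> k" for i
  proof -
    have t: "0 \<le> real i / real k" "real i / real k \<le> 1" using that kpos by auto
    have "z i = (1 - real i / real k) *\<^sub>R x + (real i / real k) *\<^sub>R y"
      unfolding z_def by (simp add: algebra_simps)
    then show ?thesis using convexD[OF cQ x y, of "1 - real i / real k" "real i / real k"] t by simp
  qed
  have step: "norm (z i - z (Suc i)) = norm (x - y) / real k" for i
  proof -
    have e1: "z (Suc i) - z i = (real (Suc i) / real k - real i / real k) *\<^sub>R (y - x)"
      unfolding z_def by (simp add: scaleR_diff_left)
    have e2: "real (Suc i) / real k - real i / real k = 1 / real k"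
      by (simp add: diff_divide_distrib[symmetric])
    have "norm (z i - z (Suc i)) = norm (z (Suc i) - z i)" by (rule norm_minus_commute)
    also have "\<dots> = norm (y - x) / real k" unfolding e1 e2 by simp
    finally show ?thesis by (simp add: norm_minus_commute)
  qed
  have "norm (x - y) < real k * r" using k r by (simp add: pos_divide_less_eq)
  then have steplt: "norm (x - y) / real k < r"
    using kpos by (simp add: divide_less_eq mult.commute)
  have ind: "i \<le> k \<Longrightarrow> norm (g x - g (z i)) \<le> b * (real i * (norm (x - y) / real k))" for i
  proof (induction i)
    case 0 then show ?case by (simp add: z_def)
  next
    case (Suc i)
    have "norm (g x - g (z (Suc i))) \<le> norm (g x - g (z i)) + norm (g (z i) - g (z (Suc i)))"
      using norm_triangle_ineq[of "g x - g (z i)" "g (z i) - g (z (Suc i))"] by simp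
    also have "\<dots> \<le> b * (real i * (norm (x - y) / real k)) + b * (norm (x - y) / real k)"
      using Suc.IH Suc.prems loc[OF zQ zQ, of i "Suc i"] step[of i] steplt by simp
    also have "\<dots> = b * (real (Suc i) * (norm (x - y) / real k))" by (simp add: algebra_simps add_divide_distrib)
    finally show ?case .
  qed
  have "z k = y" unfolding z_def using kpos by simp
  then show ?thesis using ind[of k] kpos by simp
qed

theorem mainTheorem6:
  fixes Q :: "'a::banach set" and T :: "'a \<Rightarrow> 'a"
    and r \<beta> :: real and \<beta>s :: "nat \<Rightarrow> real"
  assumes "weakly_compact Q" and "convex Q"
    and "r > 0" and "0 \<le> \<beta>" and "\<beta> < 1" and "\<beta>s \<longlonglongrightarrow> \<beta>"
    and "T ` Q \<subseteq> Q"
    and "\<And>p q n. p \<in> Q \<Longrightarrow> q \<in> Q \<Longrightarrow> n \<ge> 1 \<Longrightarrow> norm (p - q) < r \<Longrightarrow>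
           norm ((T ^^ n) p - (T ^^ n) q) \<le> \<beta>s n * norm (p - q)"
    and "\<exists>q0\<in>Q. asymptotic_radius Q (\<lambda>n. (T ^^ n) q0) < ereal r"
  shows "\<exists>!x. x \<in> Q \<and> T x = x"
proof -
  have "eventually (\<lambda>n. \<beta>s n < 1) sequentially"
    using assms(6) assms(5) by (rule order_tendstoD)
  then obtain N0 where N0: "\<And>n. n \<ge> N0 \<Longrightarrow> \<beta>s n < 1" using eventually_sequentially by auto
  define N where "N = Suc N0"
  have N1: "N \<ge> 1" and bN: "\<beta>s N < 1" using N0 unfolding N_def by auto
  define c where "c = max (\<beta>s N) 0"
  define S where "S = T ^^ N"
  have powQ: "(T ^^ n) q \<in> Q" if "q \<in> Q" for n q
    using that assms(7) by (induction n) auto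
  have SQ: "S ` Q \<subseteq> Q" unfolding S_def using powQ by blast
  have lipS: "dist (S p) (S q) \<le> c * dist p q" if "p \<in> Q" "q \<in> Q" for p q
  proof -
    have "norm (S p - S q) \<le> \<beta>s N * norm (p - q)"
      unfolding S_def
      by (rule chain_lipschitz[OF assms(2) assms(3) _ that]) (use assms(8) N1 in blast)
    also have "\<dots> \<le> c * norm (p - q)" unfolding c_def by (simp add: mult_right_mono)
    finally show ?thesis by (simp add: dist_norm)
  qed
  have Qne: "Q \<noteq> {}" using assms(9) by blast
  have cQ: "complete Q" using weakly_compact_imp_closed[OF assms(1)] complete_eq_closed by blast
  have c01: "0 \<le> c" "c < 1" using bN unfolding c_def by auto
  obtain x where x: "x \<in> Q" "S x = x" and xu: "\<And>y. y \<in> Q \<Longrightarrow> S y = y \<Longrightarrow> y = x"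
    using Banach_fix[OF cQ Qne c01 SQ lipS] by metis
  have Tx: "T x \<in> Q" using x assms(7) by blast
  have "S (T x) = T (S x)" unfolding S_def by (simp add: funpow_swap1)
  then have "S (T x) = T x" using x by simp
  then have "T x = x" using xu Tx by blast
  moreover have "y = x" if "y \<in> Q" "T y = y" for y
  proof -
    have "(T ^^ n) y = y" for n using that(2) by (induction n) auto
    then show ?thesis using xu that unfolding S_def by blast
  qed
  ultimately show ?thesis using x by blast
qed

end
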